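(* Let $f\in\mathcal{F}_k$. For any $u\in\mathbb{R}^k$, we have $L^f(\boxed{u},y)\le L^f(u,y)$ for all $y\in\mathcal{Y}$.
   Context: $[k]=\{1,\dots,k\}$, $\mathcal{Y}=\{-1,1\}^k$; $u\odot u'$ entrywise product, $|u|$ entrywise absolute value, $\mathbbm{1}$ all-ones, $(x)_+$ entrywise positive part; $\boxed{u}=\mathrm{sign}(u)\odot\min(|u|,\mathbbm{1})$ (clipping to $[-1,1]^k$). $\mathcal{F}_k$: set functions $f:2^{[k]}\to\mathbb{R}$ that are submodular, increasing ($f(S\cup T)\ge f(S)$ for disjoint $S,T$) and normalized. Lovász extension $F(x)=\max_\pi\sum_{i=1}^kx_{\pi_i}(f(\{\pi_1,..,\pi_i\})-f(\{\pi_1,..,\pi_{i-1}\}))$ for $x\in\mathbb{R}^k_+$; Lovász hinge $L^f(u,y)=F((\mathbbm{1}-u\odot y)_+)$. *)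

theory Defs
  imports "HOL-Analysis.Analysis" "HOL-Combinatorics.Permutations"
begin

text \<open>Ground set [k] = {1..k}; vectors in R^k are functions nat => real,
  only the coordinates in {1..k} matter.\<close>

definition submodular_on :: "nat \<Rightarrow> (nat set \<Rightarrow> real) \<Rightarrow> bool" where
  "submodular_on k f \<longleftrightarrow> (\<forall>S T. S \<subseteq> {1..k} \<longrightarrow> T \<subseteq> {1..k} \<longrightarrow>
      f (S \<union> T) + f (S \<inter> T) \<le> f S + f T)"

definition increasing_on :: "nat \<Rightarrow> (nat set \<Rightarrow> real) \<Rightarrow> bool" where
  "increasing_on k f \<longleftrightarrow> (\<forall>S T. S \<subseteq> {1..k} \<longrightarrow> T \<subseteq> {1..k} \<longrightarrow> S \<inter> T = {} \<longrightarrow>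
      f S \<le> f (S \<union> T))"

definition normalized :: "(nat set \<Rightarrow> real) \<Rightarrow> bool" where
  "normalized f \<longleftrightarrow> f {} = 0"

definition F_class :: "nat \<Rightarrow> (nat set \<Rightarrow> real) set" where
  "F_class k = {f. submodular_on k f \<and> increasing_on k f \<and> normalized f}"

definition lovasz_ext :: "nat \<Rightarrow> (nat set \<Rightarrow> real) \<Rightarrow> (nat \<Rightarrow> real) \<Rightarrow> real" where
  "lovasz_ext k f x = Max ((\<lambda>p. \<Sum>i=1..k. x (p i) * (f (p ` {1..i}) - f (p ` {1..i-1})))
        ` {p. p permutes {1..k}})"

definition pos_part :: "(nat \<Rightarrow> real) \<Rightarrow> (nat \<Rightarrow> real)" where
  "pos_part x = (\<lambda>i. max (x i) 0)"

definition lovasz_hinge :: "nat \<Rightarrow> (nat set \<Rightarrow> real) \<Rightarrow> (nat \<Rightarrow> real) \<Rightarrow> (nat \<Rightarrow> real) \<Rightarrow> real" where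
  "lovasz_hinge k f u y = lovasz_ext k f (pos_part (\<lambda>i. 1 - u i * y i))"

definition clip :: "(nat \<Rightarrow> real) \<Rightarrow> (nat \<Rightarrow> real)" where
  "clip u = (\<lambda>i. sgn (u i) * min \<bar>u i\<bar> 1)"

end

theory Submission
  imports Defs
begin

lemma comp_le:
  "(y::real) = -1 \<or> y = 1 \<Longrightarrow> max (1 - sgn (u::real) * min \<bar>u\<bar> 1 * y) 0 \<le> max (1 - u * y) 0"
  by (elim disjE; cases "u > 1"; cases "u < -1"; cases "u < 0"; simp add: sgn_if abs_if min_def)

lemma gain_nonneg:
  assumes inc: "increasing_on k f" and p: "p permutes {1..k}" and i: "i \<in> {1..k}"
  shows "f (p ` {1..i-1}) \<le> f (p ` {1..i})"
proof -
  have e: "{1..i} = insert i {1..i-1}" using i by auto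
  have S: "p ` {1..i-1} \<subseteq> {1..k}"
  proof -
    have "p ` {1..i-1} \<subseteq> p ` {1..k}" using i by (intro image_mono) auto
    then show ?thesis using permutes_image[OF p] by simp
  qed
  have T: "{p i} \<subseteq> {1..k}" using permutes_in_image[OF p, THEN iffD2, OF i] by blast
  have D: "p ` {1..i-1} \<inter> {p i} = {}"
  proof -
    have "p j \<noteq> p i" if "j \<in> {1..i-1}" for j
    proof
      assume "p j = p i"
      then have "j = i" using injD[OF permutes_inj[OF p]] by blast
      then show False using that by auto
    qed
    then show ?thesis by blast
  qed
  have "f (p ` {1..i-1}) \<le> f (p ` {1..i-1} \<union> {p i})"
    using inc[unfolded increasing_on_def, rule_format, OF S T D] .
  also have "p ` {1..i-1} \<union> {p i} = p ` {1..i}" using e by auto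
  finally show ?thesis .
qed

lemma lovasz_mono:
  assumes inc: "increasing_on k f"
    and le: "\<And>i. i \<in> {1..k} \<Longrightarrow> x i \<le> x' i"
  shows "lovasz_ext k f x \<le> lovasz_ext k f x'"
proof -
  let ?g = "\<lambda>x p. \<Sum>i=1..k. x (p i) * (f (p ` {1..i}) - f (p ` {1..i-1}))"
  have fin: "finite {p. p permutes {1..k}}" by (simp add: finite_permutations)
  have ne: "{p. p permutes {1..k}} \<noteq> {}" using permutes_id by blast
  have "lovasz_ext k f x \<in> ?g x ` {p. p permutes {1..k}}"
    unfolding lovasz_ext_def
  proof (rule Max_in)
    show "finite (?g x ` {p. p permutes {1..k}})" using fin by (rule finite_imageI)
    show "?g x ` {p. p permutes {1..k}} \<noteq> {}" using ne by blast
  qed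
  then obtain p where p: "p permutes {1..k}" and pm: "lovasz_ext k f x = ?g x p" by blast
  have A: "?g x p \<le> ?g x' p"
  proof (rule sum_mono)
    fix i assume i: "i \<in> {1..k}"
    have "p i \<in> {1..k}" using permutes_in_image[OF p, THEN iffD2, OF i] .
    show "x (p i) * (f (p ` {1..i}) - f (p ` {1..i-1})) \<le> x' (p i) * (f (p ` {1..i}) - f (p ` {1..i-1}))"
    proof (rule mult_right_mono)
      show "x (p i) \<le> x' (p i)" using \<open>p i \<in> {1..k}\<close> by (rule le)
      show "0 \<le> f (p ` {1..i}) - f (p ` {1..i-1})" using gain_nonneg[OF inc p i] by linarith
    qed
  qed
  have B: "?g x' p \<le> lovasz_ext k f x'"
    unfolding lovasz_ext_def
  proof (rule Max_ge)
    show "finite (?g x' ` {p. p permutes {1..k}})" using fin by (rule finite_imageI)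
    show "?g x' p \<in> ?g x' ` {p. p permutes {1..k}}" using p by blast
  qed
  show ?thesis using A B pm by linarith
qed

theorem lemma2:
  fixes k :: nat and f :: "nat set \<Rightarrow> real" and u y :: "nat \<Rightarrow> real"
  assumes "f \<in> F_class k"
    and "\<forall>i\<in>{1..k}. y i \<in> {-1, 1}"
  shows "lovasz_hinge k f (clip u) y \<le> lovasz_hinge k f u y"
  unfolding lovasz_hinge_def
proof (rule lovasz_mono)
  show "increasing_on k f" using assms(1) by (simp add: F_class_def)
  fix i assume i: "i \<in> {1..k}"
  then have "y i = -1 \<or> y i = 1" using assms(2) by auto
  then show "pos_part (\<lambda>i. 1 - clip u i * y i) i \<le> pos_part (\<lambda>i. 1 - u i * y i) i"
    unfolding pos_part_def clip_def by (rule comp_le)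
qed

end
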